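(* Let $K\in\mathbb{R}^{n\times n}$ be symmetric positive semidefinite, labels $y\in\{0,1\}^n$, sample weights $v\in\mathbb{R}^n$, $\lambda\ge0$, and consider kernel binary logistic regression in variables $\alpha\in\mathbb{R}^n$, $b\in\mathbb{R}$: $$\min F(\alpha,b)=-\sum_{i=1}^n v_i\big(y_i\log\hat y_i+(1-y_i)\log(1-\hat y_i)\big)+\lambda\alpha^\top K\alpha,\qquad \hat y=\sigma(K\alpha+b\mathbf{1}_n),$$ with $\sigma(t)=1/(1+e^{-t})$ entrywise. Let $\mathcal{Q}$ be a partition of $\{1,\dots,n\}$ such that (1) $(\mathcal{Q},\mathcal{Q})$ is equitable on $K$; (2) for each $T\in\mathcal{Q}$, $\sum_{i=1}^n v_iK_{ij}y_i$ is the same for all $j\in T$; (3) $v_i$ is constant on each $T\in\mathcal{Q}$. Then for every $b$ and every $\hat\alpha$ constant on each color of $\mathcal{Q}$, $\frac{\partial F}{\partial\alpha_{j_1}}(\hat\alpha,b)=\frac{\partial F}{\partial\alpha_{j_2}}(\hat\alpha,b)$ for all $j_1,j_2$ in the same color; hence $\mathcal{Q}$ together with the singleton $\{b\}$ is a reduction coloring for this problem.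
   Context: A partition of a finite set is a set of nonempty pairwise disjoint subsets ("colors") covering it. A pair $(\mathcal{P},\mathcal{Q})$ of partitions of the row and column indices of $A$ is equitable on $A$ if for every $S\in\mathcal{P}$, $T\in\mathcal{Q}$: $\sum_{j\in T}A_{ij}$ is the same for all $i\in S$ and $\sum_{i\in S}A_{ij}$ is the same for all $j\in T$. A reduction coloring of an unconstrained differentiable convex program $\min F(x)$ is a partition of the variables such that at every point constant on each color, the partial derivatives of $F$ with respect to variables in a common color coincide. *)

theory Defs
  imports "HOL-Analysis.Analysis" "HOL-Library.Disjoint_Sets"
begin

definition equitable :: "'r set set \<Rightarrow> 'c set set \<Rightarrow> ('r \<Rightarrow> 'c \<Rightarrow> real) \<Rightarrow> bool" where
  "equitable P Q A \<longleftrightarrow>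
     (\<forall>S\<in>P. \<forall>T\<in>Q.
        (\<forall>i1\<in>S. \<forall>i2\<in>S. (\<Sum>j\<in>T. A i1 j) = (\<Sum>j\<in>T. A i2 j)) \<and>
        (\<forall>j1\<in>T. \<forall>j2\<in>T. (\<Sum>i\<in>S. A i j1) = (\<Sum>i\<in>S. A i j2)))"

definition sigmoid :: "real \<Rightarrow> real" where
  "sigmoid t = 1 / (1 + exp (- t))"

definition klr_obj ::
  "('n::finite \<Rightarrow> 'n \<Rightarrow> real) \<Rightarrow> ('n \<Rightarrow> real) \<Rightarrow> ('n \<Rightarrow> real) \<Rightarrow> real
     \<Rightarrow> ('n \<Rightarrow> real) \<Rightarrow> real \<Rightarrow> real" where
  "klr_obj K y v lam \<alpha> b =
     (let yhat = (\<lambda>i. sigmoid ((\<Sum>j\<in>UNIV. K i j * \<alpha> j) + b)) in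
      - (\<Sum>i\<in>UNIV. v i * (y i * ln (yhat i) + (1 - y i) * ln (1 - yhat i)))
      + lam * (\<Sum>i\<in>UNIV. \<Sum>j\<in>UNIV. \<alpha> i * K i j * \<alpha> j))"

definition reduction_coloring :: "(('v \<Rightarrow> real) \<Rightarrow> real) \<Rightarrow> 'v set set \<Rightarrow> bool" where
  "reduction_coloring F P \<longleftrightarrow> partition_on UNIV P \<and>
     (\<forall>x. (\<forall>C\<in>P. \<forall>u\<in>C. \<forall>w\<in>C. x u = x w) \<longrightarrow>
        (\<forall>C\<in>P. \<forall>u\<in>C. \<forall>w\<in>C. \<exists>D.
            ((\<lambda>t. F (x(u := t))) has_real_derivative D) (at (x u)) \<and>
            ((\<lambda>t. F (x(w := t))) has_real_derivative D) (at (x w))))"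

end

theory Submission
  imports Defs
begin

lemma sigmoid_pos: "0 < sigmoid z" "sigmoid z < 1"
  unfolding sigmoid_def by (auto simp: divide_simps add_pos_pos)

lemma ln_sig_eq: "ln (sigmoid z) = - ln (1 + exp (- z))"
  unfolding sigmoid_def by (simp add: ln_div add_pos_pos)

lemma pos1e: "0 < 1 + exp (- (z::real))"
  by (smt (verit) exp_gt_zero)

lemma one_minus_sig: "1 - sigmoid z = exp (- z) / (1 + exp (- z))"
  using pos1e[of z] unfolding sigmoid_def by (simp add: field_simps)

lemma ln_1sig_eq: "ln (1 - sigmoid z) = - z - ln (1 + exp (- z))"
  using pos1e[of z] unfolding one_minus_sig by (simp add: ln_div)

lemma D_ln_sig: "((\<lambda>z. ln (sigmoid z)) has_real_derivative (1 - sigmoid z)) (at z)"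
proof -
  have "((\<lambda>z. - ln (1 + exp (- z))) has_real_derivative (1 - sigmoid z)) (at z)"
    by (rule derivative_eq_intros refl | simp add: add_pos_pos one_minus_sig)+
  then show ?thesis by (simp add: ln_sig_eq)
qed

lemma D_ln_1sig: "((\<lambda>z. ln (1 - sigmoid z)) has_real_derivative (- sigmoid z)) (at z)"
proof -
  have "((\<lambda>z. - z - ln (1 + exp (- z))) has_real_derivative (- sigmoid z)) (at z)"
    apply (rule derivative_eq_intros refl | simp add: pos1e)+
    using pos1e[of z] unfolding sigmoid_def by (simp add: field_simps)
  then show ?thesis by (simp add: ln_1sig_eq)
qed

lemma D_upd: "((\<lambda>t. (\<alpha>(j:=t)) k) has_real_derivative (if k = j then 1 else 0)) (at x)"
  by (cases "k = j") auto

lemma D_ln_sig2: "(f has_real_derivative f') (at x) \<Longrightarrow>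
  ((\<lambda>x. ln (sigmoid (f x))) has_real_derivative (1 - sigmoid (f x)) * f') (at x)"
  by (rule DERIV_chain2[OF D_ln_sig])

lemma D_ln_1sig2: "(f has_real_derivative f') (at x) \<Longrightarrow>
  ((\<lambda>x. ln (1 - sigmoid (f x))) has_real_derivative (- sigmoid (f x)) * f') (at x)"
  by (rule DERIV_chain2[OF D_ln_1sig])

lemma m1: "(x::real) * (if P then 1 else 0) = (if P then x else 0)" by simp
lemma m2: "(if P then 1 else 0) * (x::real) = (if P then x else 0)" by simp
lemma m3: "(if P then (x::real) else 0) * y = (if P then x * y else 0)" by simp
lemma m4: "(\<Sum>k\<in>S. if P then (f k::real) else 0) = (if P then (\<Sum>k\<in>S. f k) else 0)" by simp

lemma D_z:
  fixes K :: "'n::finite \<Rightarrow> 'n \<Rightarrow> real"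
  shows "((\<lambda>t. (\<Sum>k\<in>UNIV. K i k * (\<alpha>(j := t)) k) + b) has_real_derivative K i j) (at x)"
proof -
  have "((\<lambda>t. (\<Sum>k\<in>UNIV. K i k * (\<alpha>(j := t)) k) + b) has_real_derivative
     (\<Sum>k\<in>UNIV. K i k * (if k = j then 1 else 0)) + 0) (at x)"
    by (intro DERIV_add DERIV_sum DERIV_cmult D_upd DERIV_const)
  moreover have "(\<Sum>k\<in>UNIV. K i k * (if k = j then 1 else 0)) + 0 = K i j"
    unfolding m1 by simp
  ultimately show ?thesis by (simp only:)
qed

lemma D_q:
  fixes K :: "'n::finite \<Rightarrow> 'n \<Rightarrow> real"
  shows "((\<lambda>t. (\<Sum>i\<in>UNIV. \<Sum>k\<in>UNIV. (\<alpha>(j := t)) i * K i k * (\<alpha>(j := t)) k)) has_real_derivative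
   (\<Sum>k\<in>UNIV. K j k * \<alpha> k) + (\<Sum>i\<in>UNIV. \<alpha> i * K i j)) (at (\<alpha> j))"
proof -
  have "((\<lambda>t. (\<Sum>i\<in>UNIV. \<Sum>k\<in>UNIV. ((\<alpha>(j := t)) i * K i k) * (\<alpha>(j := t)) k)) has_real_derivative
   (\<Sum>i\<in>UNIV. \<Sum>k\<in>UNIV. ((\<alpha>(j := \<alpha> j)) i * K i k) * (if k = j then 1 else 0)
      + ((if i = j then 1 else 0) * K i k) * (\<alpha>(j := \<alpha> j)) k)) (at (\<alpha> j))"
    by (intro DERIV_sum DERIV_mult' DERIV_cmult_right D_upd)
  moreover have "(\<Sum>i\<in>UNIV. \<Sum>k\<in>UNIV. ((\<alpha>(j := \<alpha> j)) i * K i k) * (if k = j then 1 else 0)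
      + ((if i = j then 1 else 0) * K i k) * (\<alpha>(j := \<alpha> j)) k) =
     (\<Sum>k\<in>UNIV. K j k * \<alpha> k) + (\<Sum>i\<in>UNIV. \<alpha> i * K i j)"
    unfolding sum.distrib m1 m2 m3 m4 fun_upd_triv by (simp add: add.commute)
  ultimately show ?thesis by (simp only:)
qed

definition zz where "zz K \<alpha> b i = (\<Sum>k\<in>UNIV. K i k * \<alpha> k) + b"

definition DD where "DD K y v lam \<alpha> b j =
    - (\<Sum>i\<in>UNIV. v i * (y i * ((1 - sigmoid (zz K \<alpha> b i)) * K i j)
        + (1 - y i) * (- sigmoid (zz K \<alpha> b i) * K i j)))
     + lam * ((\<Sum>k\<in>UNIV. K j k * \<alpha> k) + (\<Sum>i\<in>UNIV. \<alpha> i * K i j))"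

lemma deriv_raw:
  fixes K :: "'n::finite \<Rightarrow> 'n \<Rightarrow> real"
  shows "((\<lambda>t. klr_obj K y v lam (\<alpha>(j := t)) b) has_real_derivative DD K y v lam \<alpha> b j) (at (\<alpha> j))"
proof -
  have "((\<lambda>t. - (\<Sum>i\<in>UNIV. v i * (y i * ln (sigmoid ((\<Sum>k\<in>UNIV. K i k * (\<alpha>(j := t)) k) + b))
          + (1 - y i) * ln (1 - sigmoid ((\<Sum>k\<in>UNIV. K i k * (\<alpha>(j := t)) k) + b))))
      + lam * (\<Sum>i\<in>UNIV. \<Sum>k\<in>UNIV. (\<alpha>(j := t)) i * K i k * (\<alpha>(j := t)) k)) has_real_derivative
    (- (\<Sum>i\<in>UNIV. v i * (y i * ((1 - sigmoid ((\<Sum>k\<in>UNIV. K i k * (\<alpha>(j := \<alpha> j)) k) + b)) * K i j)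
        + (1 - y i) * (- sigmoid ((\<Sum>k\<in>UNIV. K i k * (\<alpha>(j := \<alpha> j)) k) + b) * K i j)))
     + lam * ((\<Sum>k\<in>UNIV. K j k * \<alpha> k) + (\<Sum>i\<in>UNIV. \<alpha> i * K i j)))) (at (\<alpha> j))"
    by (intro DERIV_add DERIV_minus DERIV_sum DERIV_cmult D_ln_sig2 D_ln_1sig2 D_z D_q)
  then show ?thesis unfolding klr_obj_def Let_def DD_def zz_def fun_upd_triv .
qed

lemma sum_over_partition:
  fixes f :: "'n::finite \<Rightarrow> real"
  assumes part: "partition_on UNIV Q"
  shows "(\<Sum>i\<in>UNIV. f i) = (\<Sum>S\<in>Q. \<Sum>i\<in>S. f i)"
proof -
  have U: "\<Union>Q = UNIV" using partition_onD1[OF part] by simp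
  have d: "disjoint Q" using partition_onD2[OF part] .
  have "(\<Sum>i\<in>\<Union>Q. f i) = (sum \<circ> sum) f Q"
    by (rule sum.Union_disjoint) (use d in \<open>auto simp: disjoint_def\<close>)
  then show ?thesis using U by simp
qed

lemma col_const:
  fixes K :: "'n::finite \<Rightarrow> 'n \<Rightarrow> real" and g :: "'n \<Rightarrow> real"
  assumes part: "partition_on UNIV Q" and eq: "equitable Q Q K"
    and g: "\<forall>S\<in>Q. \<forall>i1\<in>S. \<forall>i2\<in>S. g i1 = g i2"
    and T: "T \<in> Q" "j1 \<in> T" "j2 \<in> T"
  shows "(\<Sum>i\<in>UNIV. g i * K i j1) = (\<Sum>i\<in>UNIV. g i * K i j2)"
proof -
  have ne: "\<And>S. S \<in> Q \<Longrightarrow> S \<noteq> {}" using partition_onD3[OF part] by blast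
  have calc: "(\<Sum>i\<in>S. g i * K i j) = g (SOME s. s \<in> S) * (\<Sum>i\<in>S. K i j)" if "S \<in> Q" for S j
  proof -
    have "(SOME s. s \<in> S) \<in> S" using ne[OF that] by (simp add: some_in_eq)
    then have "\<And>i. i \<in> S \<Longrightarrow> g i = g (SOME s. s \<in> S)" using g that by blast
    then show ?thesis unfolding sum_distrib_left by (intro sum.cong refl) simp
  qed
  have r: "(\<Sum>i\<in>UNIV. g i * K i j) = (\<Sum>S\<in>Q. g (SOME s. s \<in> S) * (\<Sum>i\<in>S. K i j))" for j
    unfolding sum_over_partition[OF part] by (rule sum.cong[OF refl]) (rule calc)
  have KS: "\<And>S. S \<in> Q \<Longrightarrow> (\<Sum>i\<in>S. K i j1) = (\<Sum>i\<in>S. K i j2)"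
    using eq T unfolding equitable_def by blast
  show ?thesis unfolding r by (rule sum.cong[OF refl]) (simp only: KS)
qed

lemma DD_alt:
  "DD K y v lam \<alpha> b j = - (\<Sum>i\<in>UNIV. v i * K i j * y i) + (\<Sum>i\<in>UNIV. (v i * sigmoid (zz K \<alpha> b i)) * K i j)
     + lam * ((\<Sum>k\<in>UNIV. K j k * \<alpha> k) + (\<Sum>i\<in>UNIV. \<alpha> i * K i j))"
proof -
  have "\<And>i. v i * (y i * ((1 - sigmoid (zz K \<alpha> b i)) * K i j)
        + (1 - y i) * (- sigmoid (zz K \<alpha> b i) * K i j)) = v i * K i j * y i - (v i * sigmoid (zz K \<alpha> b i)) * K i j"
    by (simp add: algebra_simps)
  then show ?thesis unfolding DD_def by (simp add: sum_subtractf)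
qed

lemma DD_eq:
  fixes K :: "'n::finite \<Rightarrow> 'n \<Rightarrow> real"
  assumes K_sym: "\<And>i j. K i j = K j i"
    and part: "partition_on UNIV Q" and eq: "equitable Q Q K"
    and c2: "\<And>T j1 j2. T \<in> Q \<Longrightarrow> j1 \<in> T \<Longrightarrow> j2 \<in> T \<Longrightarrow>
               (\<Sum>i\<in>UNIV. v i * K i j1 * y i) = (\<Sum>i\<in>UNIV. v i * K i j2 * y i)"
    and c3: "\<And>T i1 i2. T \<in> Q \<Longrightarrow> i1 \<in> T \<Longrightarrow> i2 \<in> T \<Longrightarrow> v i1 = v i2"
    and a: "\<forall>T\<in>Q. \<forall>j1\<in>T. \<forall>j2\<in>T. \<alpha> j1 = \<alpha> j2"
    and T: "T \<in> Q" "j1 \<in> T" "j2 \<in> T"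
  shows "DD K y v lam \<alpha> b j1 = DD K y v lam \<alpha> b j2"
proof -
  have sy: "\<And>j. (\<Sum>k\<in>UNIV. K j k * \<alpha> k) = (\<Sum>k\<in>UNIV. \<alpha> k * K k j)"
    by (rule sum.cong[OF refl]) (metis K_sym mult.commute)
  have A: "(\<Sum>i\<in>UNIV. \<alpha> i * K i j1) = (\<Sum>i\<in>UNIV. \<alpha> i * K i j2)"
    by (rule col_const[OF part eq a T])
  have z: "\<forall>S\<in>Q. \<forall>i1\<in>S. \<forall>i2\<in>S. zz K \<alpha> b i1 = zz K \<alpha> b i2"
  proof (intro ballI)
    fix S i1 i2 assume "S \<in> Q" "i1 \<in> S" "i2 \<in> S"
    then show "zz K \<alpha> b i1 = zz K \<alpha> b i2"
      unfolding zz_def sy using col_const[OF part eq a, of S i1 i2] by simp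
  qed
  have g: "\<forall>S\<in>Q. \<forall>i1\<in>S. \<forall>i2\<in>S. v i1 * sigmoid (zz K \<alpha> b i1) = v i2 * sigmoid (zz K \<alpha> b i2)"
  proof (intro ballI)
    fix S i1 i2 assume "S \<in> Q" "i1 \<in> S" "i2 \<in> S"
    then have "zz K \<alpha> b i1 = zz K \<alpha> b i2" "v i1 = v i2" using z c3[of S i1 i2] by blast+
    then show "v i1 * sigmoid (zz K \<alpha> b i1) = v i2 * sigmoid (zz K \<alpha> b i2)" by simp
  qed
  have B: "(\<Sum>i\<in>UNIV. (v i * sigmoid (zz K \<alpha> b i)) * K i j1) = (\<Sum>i\<in>UNIV. (v i * sigmoid (zz K \<alpha> b i)) * K i j2)"
    by (rule col_const[OF part eq g T])
  show ?thesis unfolding DD_alt sy using A B c2[OF T] by simp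
qed


lemma deriv_b:
  fixes K :: "'n::finite \<Rightarrow> 'n \<Rightarrow> real"
  shows "\<exists>D. ((\<lambda>t. klr_obj K y v lam \<alpha> t) has_real_derivative D) (at b)"
proof -
  have "((\<lambda>t. - (\<Sum>i\<in>UNIV. v i * (y i * ln (sigmoid ((\<Sum>j\<in>UNIV. K i j * \<alpha> j) + t)) +
          (1 - y i) * ln (1 - sigmoid ((\<Sum>j\<in>UNIV. K i j * \<alpha> j) + t)))) +
       lam * (\<Sum>i\<in>UNIV. \<Sum>j\<in>UNIV. \<alpha> i * K i j * \<alpha> j)) has_real_derivative
     - (\<Sum>i\<in>UNIV. v i * (y i * ((1 - sigmoid ((\<Sum>j\<in>UNIV. K i j * \<alpha> j) + b)) * (0 + 1)) +
          (1 - y i) * (- sigmoid ((\<Sum>j\<in>UNIV. K i j * \<alpha> j) + b) * (0 + 1)))) + 0) (at b)"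
    by (intro DERIV_add DERIV_minus DERIV_sum DERIV_cmult D_ln_sig2 D_ln_1sig2 DERIV_ident DERIV_const)
  then show ?thesis unfolding klr_obj_def Let_def by blast
qed

theorem theorem7:
  fixes K :: "'n::finite \<Rightarrow> 'n \<Rightarrow> real"
    and y v :: "'n \<Rightarrow> real"
    and lam :: real
    and Q :: "'n set set"
  assumes K_sym: "\<And>i j. K i j = K j i"
    and K_psd: "\<And>x. (\<Sum>i\<in>UNIV. \<Sum>j\<in>UNIV. x i * K i j * x j) \<ge> 0"
    and y01: "\<And>i. y i \<in> {0, 1}"
    and lam: "lam \<ge> 0"
    and Q_part: "partition_on UNIV Q"
    and eq: "equitable Q Q K"
    and c2: "\<And>T j1 j2. T \<in> Q \<Longrightarrow> j1 \<in> T \<Longrightarrow> j2 \<in> T \<Longrightarrow>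
               (\<Sum>i\<in>UNIV. v i * K i j1 * y i) = (\<Sum>i\<in>UNIV. v i * K i j2 * y i)"
    and c3: "\<And>T i1 i2. T \<in> Q \<Longrightarrow> i1 \<in> T \<Longrightarrow> i2 \<in> T \<Longrightarrow> v i1 = v i2"
  shows "(\<forall>b \<alpha>. (\<forall>T\<in>Q. \<forall>j1\<in>T. \<forall>j2\<in>T. \<alpha> j1 = \<alpha> j2) \<longrightarrow>
            (\<forall>T\<in>Q. \<forall>j1\<in>T. \<forall>j2\<in>T. \<exists>D.
               ((\<lambda>t. klr_obj K y v lam (\<alpha>(j1 := t)) b) has_real_derivative D) (at (\<alpha> j1)) \<and>
               ((\<lambda>t. klr_obj K y v lam (\<alpha>(j2 := t)) b) has_real_derivative D) (at (\<alpha> j2))))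
         \<and> reduction_coloring (\<lambda>x. klr_obj K y v lam (\<lambda>i. x (Some i)) (x None))
             ({Some ` T | T. T \<in> Q} \<union> {{None}})"
proof
  show P1: "\<forall>b \<alpha>. (\<forall>T\<in>Q. \<forall>j1\<in>T. \<forall>j2\<in>T. \<alpha> j1 = \<alpha> j2) \<longrightarrow>
            (\<forall>T\<in>Q. \<forall>j1\<in>T. \<forall>j2\<in>T. \<exists>D.
               ((\<lambda>t. klr_obj K y v lam (\<alpha>(j1 := t)) b) has_real_derivative D) (at (\<alpha> j1)) \<and>
               ((\<lambda>t. klr_obj K y v lam (\<alpha>(j2 := t)) b) has_real_derivative D) (at (\<alpha> j2)))"
  proof (intro allI impI ballI)
    fix b :: real and \<alpha> :: "'n \<Rightarrow> real" and T j1 j2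
    assume a: "\<forall>T\<in>Q. \<forall>j1\<in>T. \<forall>j2\<in>T. \<alpha> j1 = \<alpha> j2" and T: "T \<in> Q" "j1 \<in> T" "j2 \<in> T"
    have e: "DD K y v lam \<alpha> b j1 = DD K y v lam \<alpha> b j2"
      by (rule DD_eq[OF K_sym Q_part eq c2 c3 a T])
    show "\<exists>D. ((\<lambda>t. klr_obj K y v lam (\<alpha>(j1 := t)) b) has_real_derivative D) (at (\<alpha> j1)) \<and>
               ((\<lambda>t. klr_obj K y v lam (\<alpha>(j2 := t)) b) has_real_derivative D) (at (\<alpha> j2))"
      using deriv_raw[of K y v lam \<alpha> j1 b] deriv_raw[of K y v lam \<alpha> j2 b] unfolding e by blast
  qed
  let ?P = "{Some ` T | T. T \<in> Q} \<union> {{None}}"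
  have U: "\<Union>Q = UNIV" using partition_onD1[OF Q_part] by simp
  have d: "disjoint Q" using partition_onD2[OF Q_part] .
  have ne: "{} \<notin> Q" using partition_onD3[OF Q_part] .
  have memP: "\<And>p. p \<in> ?P \<longleftrightarrow> (\<exists>T\<in>Q. p = Some ` T) \<or> p = {None}" by blast
  have part: "partition_on UNIV ?P"
  proof (rule partition_onI)
    show "\<Union>?P = UNIV"
    proof (rule set_eqI)
      fix x :: "'n option"
      show "x \<in> \<Union>?P \<longleftrightarrow> x \<in> UNIV"
      proof (cases x)
        case None
        have "{None} \<in> ?P" by blast
        moreover have "x \<in> {None}" using None by simp
        ultimately show ?thesis using UnionI[of "{None}" ?P x] by simp
      next
        case (Some i)
        have "i \<in> \<Union>Q" by (simp add: U)
        then obtain T where T: "T \<in> Q" "i \<in> T" by (rule UnionE)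
        then have "Some ` T \<in> ?P" by blast
        moreover have "x \<in> Some ` T" using Some T by simp
        ultimately show ?thesis using UnionI[of "Some ` T" ?P x] by simp
      qed
    qed
    show "disjnt p q" if "p \<in> ?P" "q \<in> ?P" "p \<noteq> q" for p q
    proof -
      have p: "(\<exists>T\<in>Q. p = Some ` T) \<or> p = {None}" using that(1) memP by blast
      have q: "(\<exists>T\<in>Q. q = Some ` T) \<or> q = {None}" using that(2) memP by blast
      show ?thesis
      proof (cases "p = {None}")
        case pN: True
        show ?thesis
        proof (cases "q = {None}")
          case True then show ?thesis using pN that(3) by simp
        next
          case False
          then obtain T2 where "q = Some ` T2" using q by blast
          then show ?thesis using pN unfolding disjnt_def by blast
        qed
      next
        case False
        then obtain T1 where T1: "T1 \<in> Q" "p = Some ` T1" using p by blast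
        show ?thesis
        proof (cases "q = {None}")
          case True then show ?thesis using T1 unfolding disjnt_def by blast
        next
          case False
          then obtain T2 where T2: "T2 \<in> Q" "q = Some ` T2" using q by blast
          then have "T1 \<noteq> T2" using that(3) T1 by blast
          then have "T1 \<inter> T2 = {}" using d T1(1) T2(1) unfolding disjoint_def by blast
          then show ?thesis unfolding T1(2) T2(2) disjnt_def by blast
        qed
      qed
    qed
    show "{} \<notin> ?P"
    proof
      assume "{} \<in> ?P"
      then have "(\<exists>T\<in>Q. {} = Some ` T)" using memP by blast
      then show False using ne by (metis image_is_empty)
    qed
  qed
  show "reduction_coloring (\<lambda>x. klr_obj K y v lam (\<lambda>i. x (Some i)) (x None)) ?P"
    unfolding reduction_coloring_def
  proof (intro conjI allI impI ballI)
    show "partition_on UNIV ?P" by (rule part)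
    fix x :: "'n option \<Rightarrow> real" and C u w
    assume xc: "\<forall>C\<in>?P. \<forall>u\<in>C. \<forall>w\<in>C. x u = x w" and C: "C \<in> ?P" "u \<in> C" "w \<in> C"
    define \<alpha> where "\<alpha> = (\<lambda>i. x (Some i))"
    show "\<exists>D. ((\<lambda>t. klr_obj K y v lam (\<lambda>i. (x(u := t)) (Some i)) ((x(u := t)) None)) has_real_derivative D) (at (x u)) \<and>
              ((\<lambda>t. klr_obj K y v lam (\<lambda>i. (x(w := t)) (Some i)) ((x(w := t)) None)) has_real_derivative D) (at (x w))"
    proof (cases "C = {None}")
      case True
      then have "u = None" "w = None" using C by auto
      moreover obtain D where "((\<lambda>t. klr_obj K y v lam \<alpha> t) has_real_derivative D) (at (x None))"
        using deriv_b by blast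
      ultimately show ?thesis unfolding \<alpha>_def by auto
    next
      case False
      then obtain T where T: "T \<in> Q" "C = Some ` T" using C by auto
      then obtain j1 j2 where j: "u = Some j1" "w = Some j2" "j1 \<in> T" "j2 \<in> T" using C by auto
      have a: "\<forall>T\<in>Q. \<forall>j1\<in>T. \<forall>j2\<in>T. \<alpha> j1 = \<alpha> j2"
      proof (intro ballI)
        fix T' i1 i2 assume "T' \<in> Q" "i1 \<in> T'" "i2 \<in> T'"
        then have "Some ` T' \<in> ?P" "Some i1 \<in> Some ` T'" "Some i2 \<in> Some ` T'" by auto
        then show "\<alpha> i1 = \<alpha> i2" unfolding \<alpha>_def using xc by blast
      qed
      have f1: "(\<lambda>t. klr_obj K y v lam (\<lambda>i. (x(u := t)) (Some i)) ((x(u := t)) None))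
          = (\<lambda>t. klr_obj K y v lam (\<alpha>(j1 := t)) (x None))"
        unfolding j \<alpha>_def by (intro ext arg_cong2[where f="klr_obj K y v lam"]) auto
      have f2: "(\<lambda>t. klr_obj K y v lam (\<lambda>i. (x(w := t)) (Some i)) ((x(w := t)) None))
          = (\<lambda>t. klr_obj K y v lam (\<alpha>(j2 := t)) (x None))"
        unfolding j \<alpha>_def by (intro ext arg_cong2[where f="klr_obj K y v lam"]) auto
      have xu: "x u = \<alpha> j1" "x w = \<alpha> j2" unfolding j \<alpha>_def by auto
      show ?thesis unfolding f1 f2 xu 
        using mp[OF spec[OF spec[OF P1, of "x None"], of \<alpha>] a] T(1) j(3,4) by blast
    qed
  qed
qed

end
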